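(* The functor $\mathcal{M}\colon\mathbb{O}\to\mathbf{Set}$ preserves pullbacks.
   Context: Fix a set $Act$ of action labels, an infinite set $\mathcal{E}$ of event names and a set $S$ of places. An $Act$-labelled poset is $O=(X_O,\preccurlyeq_O,l_O)$, $X_O\subseteq\mathcal{E}$, with partial order $\preccurlyeq_O$ and $l_O\colon X_O\to Act$; $|O|=\{(x,l_O(x))\}$. Morphisms preserve order and labels (acting on labelled events by $\sigma(x_a)=\sigma(x)_a$); order-embeddings additionally reflect order. $\mathbb{O}$ is the category whose objects are chosen representatives of the isomorphism classes of finite $Act$-labelled posets (abstract posets) and whose morphisms are order-embeddings. For $K\subseteq|O|$, $K$ is down-closed if $y\in K$, $x\preccurlyeq_O y$ imply $x\in K$, and $\downarrow_O K=\{y\in|O|:\exists x\in K,\ y\preccurlyeq_O x\}$. A causal marking is a finite set $c$ of pairs $K\vdash s$ with $s\in S$ and $K$ a finite subset of $\mathcal{E}\times Act$; $c\sigma=\{\sigma(K)\vdash s\}$ and $\downarrow_O c=\{\downarrow_O K\vdash s: K\vdash s\in c\}$. $O\rhd c$ is a P-marking if every cause set of $c$ is a down-closed subset of $|O|$. The presheaf of P-markings $\mathcal{M}\colon\mathbb{O}\to\mathbf{Set}$ is $\mathcal{M}(O)=\{c: O\rhd c\text{ is a P-marking}\}$ and, for $\sigma\colon O\to O'$, $\mathcal{M}(\sigma)(c)=\downarrow_{O'}(c\sigma)$. *)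

theory Defs
  imports Main
begin

(* An Act-labelled poset T = (X_O, order, labelling); event names of type 'e, actions 'a.
   The order is a relation on X_O; the labelling is made extensional (undefined outside X_O)
   so that equal posets are equal as HOL values. *)
type_synonym ('e,'a) lposet = "'e set \<times> ('e \<times> 'e) set \<times> ('e \<Rightarrow> 'a)"

definition evs :: "('e,'a) lposet \<Rightarrow> 'e set" where "evs T = fst T"
definition ord :: "('e,'a) lposet \<Rightarrow> ('e \<times> 'e) set" where "ord T = fst (snd T)"
definition lab :: "('e,'a) lposet \<Rightarrow> 'e \<Rightarrow> 'a" where "lab T = snd (snd T)"

definition wf_lposet :: "('e,'a) lposet \<Rightarrow> bool" where
  "wf_lposet T \<longleftrightarrow>
     ord T \<subseteq> evs T \<times> evs T \<and>
     (\<forall>x\<in>evs T. (x,x) \<in> ord T) \<and>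
     (\<forall>x y z. (x,y) \<in> ord T \<longrightarrow> (y,z) \<in> ord T \<longrightarrow> (x,z) \<in> ord T) \<and>
     (\<forall>x y. (x,y) \<in> ord T \<longrightarrow> (y,x) \<in> ord T \<longrightarrow> x = y) \<and>
     (\<forall>x. x \<notin> evs T \<longrightarrow> lab T x = undefined)"

definition finite_lposet :: "('e,'a) lposet \<Rightarrow> bool" where
  "finite_lposet T \<longleftrightarrow> wf_lposet T \<and> finite (evs T)"

definition levs :: "('e,'a) lposet \<Rightarrow> ('e \<times> 'a) set" where
  "levs T = {(x, lab T x) | x. x \<in> evs T}"

definition oemb :: "('e,'a) lposet \<Rightarrow> ('e,'a) lposet \<Rightarrow> ('e \<Rightarrow> 'e) \<Rightarrow> bool" where
  "oemb T T' \<sigma> \<longleftrightarrow>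
     (\<forall>x\<in>evs T. \<sigma> x \<in> evs T') \<and>
     (\<forall>x\<in>evs T. lab T' (\<sigma> x) = lab T x) \<and>
     (\<forall>x\<in>evs T. \<forall>y\<in>evs T. (x,y) \<in> ord T \<longleftrightarrow> (\<sigma> x, \<sigma> y) \<in> ord T')"

(* equality of morphisms out of T (they are functions on X_O) *)
definition meq :: "('e,'a) lposet \<Rightarrow> ('e \<Rightarrow> 'e) \<Rightarrow> ('e \<Rightarrow> 'e) \<Rightarrow> bool" where
  "meq T f g \<longleftrightarrow> (\<forall>x\<in>evs T. f x = g x)"

definition lposet_iso :: "('e,'a) lposet \<Rightarrow> ('e,'a) lposet \<Rightarrow> bool" where
  "lposet_iso T T' \<longleftrightarrow> (\<exists>\<sigma> \<tau>. oemb T T' \<sigma> \<and> oemb T' T \<tau> \<and>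
       meq T (\<tau> \<circ> \<sigma>) id \<and> meq T' (\<sigma> \<circ> \<tau>) id)"

(* Reps is a choice of representatives of the isomorphism classes of finite labelled posets:
   the objects of the category \<T>. *)
definition is_rep_choice :: "('e,'a) lposet set \<Rightarrow> bool" where
  "is_rep_choice Reps \<longleftrightarrow>
     (\<forall>T\<in>Reps. finite_lposet T) \<and>
     (\<forall>T. finite_lposet T \<longrightarrow> (\<exists>!R. R \<in> Reps \<and> lposet_iso T R))"

definition is_pullback_O ::
  "('e,'a) lposet set \<Rightarrow> ('e,'a) lposet \<Rightarrow> ('e,'a) lposet \<Rightarrow> ('e,'a) lposet \<Rightarrow> ('e,'a) lposet \<Rightarrow>
   ('e \<Rightarrow> 'e) \<Rightarrow> ('e \<Rightarrow> 'e) \<Rightarrow> ('e \<Rightarrow> 'e) \<Rightarrow> ('e \<Rightarrow> 'e) \<Rightarrow> bool" where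
  "is_pullback_O Reps P B C D p1 p2 h k \<longleftrightarrow>
     P \<in> Reps \<and> B \<in> Reps \<and> C \<in> Reps \<and> D \<in> Reps \<and>
     oemb P B p1 \<and> oemb P C p2 \<and> oemb B D h \<and> oemb C D k \<and>
     meq P (h \<circ> p1) (k \<circ> p2) \<and>
     (\<forall>Q\<in>Reps. \<forall>q1 q2. oemb Q B q1 \<and> oemb Q C q2 \<and> meq Q (h \<circ> q1) (k \<circ> q2) \<longrightarrow>
        (\<exists>u. oemb Q P u \<and> meq Q (p1 \<circ> u) q1 \<and> meq Q (p2 \<circ> u) q2 \<and>
             (\<forall>v. oemb Q P v \<and> meq Q (p1 \<circ> v) q1 \<and> meq Q (p2 \<circ> v) q2 \<longrightarrow> meq Q u v)))"

(* Causal markings: finite sets of pairs K \<turnstile> s *)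
type_synonym ('e,'a,'s) cmarking = "(('e \<times> 'a) set \<times> 's) set"

definition down_closed :: "('e,'a) lposet \<Rightarrow> ('e \<times> 'a) set \<Rightarrow> bool" where
  "down_closed T K \<longleftrightarrow> (\<forall>y\<in>K. \<forall>x\<in>levs T. (fst x, fst y) \<in> ord T \<longrightarrow> x \<in> K)"

definition down :: "('e,'a) lposet \<Rightarrow> ('e \<times> 'a) set \<Rightarrow> ('e \<times> 'a) set" where
  "down T K = {y \<in> levs T. \<exists>x\<in>K. (fst y, fst x) \<in> ord T}"

definition down_m :: "('e,'a) lposet \<Rightarrow> ('e,'a,'s) cmarking \<Rightarrow> ('e,'a,'s) cmarking" where
  "down_m T c = {(down T K, s) | K s. (K, s) \<in> c}"

definition lmap :: "('e \<Rightarrow> 'e) \<Rightarrow> 'e \<times> 'a \<Rightarrow> 'e \<times> 'a" where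
  "lmap \<sigma> xa = (\<sigma> (fst xa), snd xa)"

definition cren :: "('e \<Rightarrow> 'e) \<Rightarrow> ('e,'a,'s) cmarking \<Rightarrow> ('e,'a,'s) cmarking" where
  "cren \<sigma> c = {(lmap \<sigma> ` K, s) | K s. (K, s) \<in> c}"

definition Mobj :: "('e,'a) lposet \<Rightarrow> ('e,'a,'s) cmarking set" where
  "Mobj T = {c. finite c \<and> (\<forall>(K,s)\<in>c. finite K \<and> K \<subseteq> levs T \<and> down_closed T K)}"

definition Mmor :: "('e,'a) lposet \<Rightarrow> ('e \<Rightarrow> 'e) \<Rightarrow> ('e,'a,'s) cmarking \<Rightarrow> ('e,'a,'s) cmarking" where
  "Mmor T' \<sigma> c = down_m T' (cren \<sigma> c)"

(* A commuting square of sets/functions  SP --f1--> SB --g1--> SD,  SP --f2--> SC --g2--> SD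
   is a pullback in Set iff  x \<mapsto> (f1 x, f2 x)  is a bijection onto the canonical pullback. *)
definition is_pullback_Set ::
  "'x set \<Rightarrow> 'x set \<Rightarrow> 'x set \<Rightarrow> 'x set \<Rightarrow> ('x \<Rightarrow> 'x) \<Rightarrow> ('x \<Rightarrow> 'x) \<Rightarrow> ('x \<Rightarrow> 'x) \<Rightarrow> ('x \<Rightarrow> 'x) \<Rightarrow> bool" where
  "is_pullback_Set SP SB SC SD f1 f2 g1 g2 \<longleftrightarrow>
     (\<forall>x\<in>SP. f1 x \<in> SB \<and> f2 x \<in> SC) \<and> (\<forall>x\<in>SB. g1 x \<in> SD) \<and> (\<forall>x\<in>SC. g2 x \<in> SD) \<and>
     (\<forall>x\<in>SP. g1 (f1 x) = g2 (f2 x)) \<and>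
     bij_betw (\<lambda>x. (f1 x, f2 x)) SP {(b, c). b \<in> SB \<and> c \<in> SC \<and> g1 b = g2 c}"

end

theory Submission
  imports Defs
begin


lemma wf_refl: "wf_lposet T \<Longrightarrow> x \<in> evs T \<Longrightarrow> (x,x) \<in> ord T"
  by (simp add: wf_lposet_def)
lemma wf_trans: "wf_lposet T \<Longrightarrow> (x,y) \<in> ord T \<Longrightarrow> (y,z) \<in> ord T \<Longrightarrow> (x,z) \<in> ord T"
  unfolding wf_lposet_def by blast
lemma wf_antisym: "wf_lposet T \<Longrightarrow> (x,y) \<in> ord T \<Longrightarrow> (y,x) \<in> ord T \<Longrightarrow> x = y"
  unfolding wf_lposet_def by blast
lemma wf_sub: "wf_lposet T \<Longrightarrow> (x,y) \<in> ord T \<Longrightarrow> x \<in> evs T \<and> y \<in> evs T"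
  unfolding wf_lposet_def by blast

lemma levs_iff: "z \<in> levs T \<longleftrightarrow> fst z \<in> evs T \<and> snd z = lab T (fst z)"
  unfolding levs_def by (cases z) auto

lemma levs_fst: "x \<in> X \<Longrightarrow> X \<subseteq> levs T \<Longrightarrow> fst x \<in> evs T"
  unfolding levs_def by auto

lemma oemb_ev: "oemb T T' \<sigma> \<Longrightarrow> x \<in> evs T \<Longrightarrow> \<sigma> x \<in> evs T'"
  unfolding oemb_def by simp
lemma oemb_lab: "oemb T T' \<sigma> \<Longrightarrow> x \<in> evs T \<Longrightarrow> lab T' (\<sigma> x) = lab T x"
  unfolding oemb_def by simp
lemma oemb_ord: "oemb T T' \<sigma> \<Longrightarrow> x \<in> evs T \<Longrightarrow> y \<in> evs T \<Longrightarrow> (\<sigma> x, \<sigma> y) \<in> ord T' \<longleftrightarrow> (x,y) \<in> ord T"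
  unfolding oemb_def by simp

lemma finite_levs: "finite (evs T) \<Longrightarrow> finite (levs T)"
  unfolding levs_def by simp

lemma down_alt: "down T X = {y \<in> levs T. \<exists>x\<in>fst ` X. (fst y, x) \<in> ord T}"
  unfolding down_def by auto

lemma down_fst: "fst ` X = fst ` Y \<Longrightarrow> down T X = down T Y"
  unfolding down_alt by simp

lemma fst_lmap: "fst ` lmap f ` X = f ` fst ` X"
  unfolding lmap_def by force

lemma down_sub: "down T X \<subseteq> levs T" unfolding down_def by auto

lemma down_closed_down: "wf_lposet T \<Longrightarrow> down_closed T (down T X)"
  unfolding down_closed_def down_def by (blast intro: wf_trans)

lemma Mmor_eq: "Mmor T' \<sigma> c = (\<lambda>(K,s). (down T' (lmap \<sigma> ` K), s)) ` c"
  unfolding Mmor_def down_m_def cren_def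
proof (intro equalityI subsetI)
  fix z assume "z \<in> {(down T' K, s) |K s. (K, s) \<in> {(lmap \<sigma> ` K, s) |K s. (K, s) \<in> c}}"
  then obtain K0 s where "z = (down T' (lmap \<sigma> ` K0), s)" "(K0,s) \<in> c" by blast
  thus "z \<in> (\<lambda>(K,s). (down T' (lmap \<sigma> ` K), s)) ` c" by (simp add: rev_image_eqI)
next
  fix z assume "z \<in> (\<lambda>(K,s). (down T' (lmap \<sigma> ` K), s)) ` c"
  then obtain K0 s where "(K0,s) \<in> c" "z = (down T' (lmap \<sigma> ` K0), s)" by auto
  thus "z \<in> {(down T' K, s) |K s. (K, s) \<in> {(lmap \<sigma> ` K, s) |K s. (K, s) \<in> c}}" by blast
qed

lemma Mmor_in:
  assumes "finite_lposet T'" "finite c"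
  shows "Mmor T' \<sigma> c \<in> Mobj T'"
proof -
  have w: "wf_lposet T'" and f: "finite (levs T')" using assms(1) finite_levs[of T'] unfolding finite_lposet_def by auto
  have "\<forall>z\<in>Mmor T' \<sigma> c. finite (fst z) \<and> fst z \<subseteq> levs T' \<and> down_closed T' (fst z)"
  proof
    fix z assume "z \<in> Mmor T' \<sigma> c"
    then obtain K where "fst z = down T' K" unfolding Mmor_eq by auto
    thus "finite (fst z) \<and> fst z \<subseteq> levs T' \<and> down_closed T' (fst z)"
      using down_sub down_closed_down[OF w] f finite_subset by metis
  qed
  moreover have "finite (Mmor T' \<sigma> c)" using assms(2) unfolding Mmor_eq by simp
  ultimately show ?thesis unfolding Mobj_def by (simp add: case_prod_unfold)
qed

lemma down_memI:
  assumes "y \<in> levs T" "x \<in> X" "(fst y, fst x) \<in> ord T"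
  shows "y \<in> down T X"
  using assms unfolding down_def by blast

lemma down_memE:
  assumes "y \<in> down T X"
  obtains x where "y \<in> levs T" "x \<in> X" "(fst y, fst x) \<in> ord T"
  using assms unfolding down_def by blast

lemma lmap_mem: "x \<in> X \<Longrightarrow> lmap f x \<in> lmap f ` X" by simp

lemma fst_lmap1: "fst (lmap f x) = f (fst x)" by (simp add: lmap_def)

lemma down_comp:
  assumes "wf_lposet T'" "wf_lposet T''" "oemb T T' \<sigma>" "oemb T' T'' \<tau>" "X \<subseteq> levs T"
  shows "down T'' (lmap \<tau> ` down T' (lmap \<sigma> ` X)) = down T'' (lmap (\<tau> \<circ> \<sigma>) ` X)"
proof (intro equalityI subsetI)
  fix y assume "y \<in> down T'' (lmap \<tau> ` down T' (lmap \<sigma> ` X))"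
  then obtain w' where y: "y \<in> levs T''" and w': "w' \<in> lmap \<tau> ` down T' (lmap \<sigma> ` X)"
    and o1': "(fst y, fst w') \<in> ord T''" by (rule down_memE)
  then obtain w where w: "w \<in> down T' (lmap \<sigma> ` X)" and w'eq: "w' = lmap \<tau> w" by blast
  then obtain x' where wl: "w \<in> levs T'" and x': "x' \<in> lmap \<sigma> ` X" and o2': "(fst w, fst x') \<in> ord T'"
    by (elim down_memE)
  then obtain x where x: "x \<in> X" and x'eq: "x' = lmap \<sigma> x" by blast
  have o1: "(fst y, \<tau> (fst w)) \<in> ord T''" using o1' w'eq fst_lmap1 by metis
  have o2: "(fst w, \<sigma> (fst x)) \<in> ord T'" using o2' x'eq fst_lmap1 by metis
  have "fst x \<in> evs T" by (rule levs_fst[OF x assms(5)])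
  hence "(\<tau> (fst w), \<tau> (\<sigma> (fst x))) \<in> ord T''"
    using oemb_ord[OF assms(4) conjunct1[OF wf_sub[OF assms(1) o2]] conjunct2[OF wf_sub[OF assms(1) o2]]] o2 by simp
  hence "(fst y, \<tau> (\<sigma> (fst x))) \<in> ord T''" by (rule wf_trans[OF assms(2) o1])
  hence "(fst y, fst (lmap (\<tau> \<circ> \<sigma>) x)) \<in> ord T''" by (simp add: fst_lmap1)
  thus "y \<in> down T'' (lmap (\<tau> \<circ> \<sigma>) ` X)" by (rule down_memI[OF y lmap_mem[OF x]])
next
  fix y assume "y \<in> down T'' (lmap (\<tau> \<circ> \<sigma>) ` X)"
  then obtain x' where y: "y \<in> levs T''" and x': "x' \<in> lmap (\<tau> \<circ> \<sigma>) ` X" and o1': "(fst y, fst x') \<in> ord T''"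
    by (rule down_memE)
  then obtain x where x: "x \<in> X" and x'eq: "x' = lmap (\<tau> \<circ> \<sigma>) x" by blast
  have o1: "(fst y, \<tau> (\<sigma> (fst x))) \<in> ord T''" using o1' x'eq fst_lmap1 by (metis comp_apply)
  have "fst x \<in> evs T" by (rule levs_fst[OF x assms(5)])
  hence e: "\<sigma> (fst x) \<in> evs T'" by (rule oemb_ev[OF assms(3)])
  define w where "w = (\<sigma> (fst x), lab T' (\<sigma> (fst x)))"
  have wl: "w \<in> levs T'" using e unfolding levs_iff w_def by simp
  have "(fst w, fst (lmap \<sigma> x)) \<in> ord T'" using wf_refl[OF assms(1) e] by (simp add: w_def fst_lmap1)
  hence wd: "w \<in> down T' (lmap \<sigma> ` X)" by (rule down_memI[OF wl lmap_mem[OF x]])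
  have "(fst y, fst (lmap \<tau> w)) \<in> ord T''" using o1 by (simp add: w_def fst_lmap1)
  thus "y \<in> down T'' (lmap \<tau> ` down T' (lmap \<sigma> ` X))" by (rule down_memI[OF y lmap_mem[OF wd]])
qed

lemma down_meq:
  assumes "meq T f g" "X \<subseteq> levs T"
  shows "down T' (lmap f ` X) = down T' (lmap g ` X)"
proof (rule down_fst)
  have "\<forall>x\<in>X. f (fst x) = g (fst x)" using assms(1) levs_fst[OF _ assms(2)] unfolding meq_def by blast
  hence "(\<lambda>x. fst (lmap f x)) ` X = (\<lambda>x. fst (lmap g x)) ` X" by (intro image_cong) (auto simp: lmap_def)
  thus "fst ` lmap f ` X = fst ` lmap g ` X" by (simp add: image_image)
qed

lemma down_refl_mem:
  assumes "wf_lposet T" "wf_lposet T'" "oemb T T' \<sigma>" "z \<in> levs T" "K \<subseteq> levs T" "down_closed T K"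
  shows "lmap \<sigma> z \<in> down T' (lmap \<sigma> ` K) \<longleftrightarrow> z \<in> K"
proof
  assume "lmap \<sigma> z \<in> down T' (lmap \<sigma> ` K)"
  then obtain x' where x': "x' \<in> lmap \<sigma> ` K" and o': "(fst (lmap \<sigma> z), fst x') \<in> ord T'"
    by (rule down_memE)
  then obtain x where x: "x \<in> K" and xe: "x' = lmap \<sigma> x" by blast
  have o: "(\<sigma> (fst z), \<sigma> (fst x)) \<in> ord T'" using o' xe by (simp add: fst_lmap1)
  have ex: "fst x \<in> evs T" by (rule levs_fst[OF x assms(5)])
  have ez: "fst z \<in> evs T" using assms(4) by (simp add: levs_iff)
  have "(fst z, fst x) \<in> ord T" using o oemb_ord[OF assms(3) ez ex] by simp
  thus "z \<in> K" using assms(4,6) x unfolding down_closed_def by blast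
next
  have ez: "fst z \<in> evs T" using assms(4) by (simp add: levs_iff)
  have zl: "lmap \<sigma> z \<in> levs T'" using assms(4) oemb_ev[OF assms(3) ez] oemb_lab[OF assms(3) ez]
    by (simp add: levs_iff lmap_def)
  assume z: "z \<in> K"
  have "(fst (lmap \<sigma> z), fst (lmap \<sigma> z)) \<in> ord T'"
    by (rule wf_refl[OF assms(2)]) (simp add: fst_lmap1 oemb_ev[OF assms(3) ez])
  thus "lmap \<sigma> z \<in> down T' (lmap \<sigma> ` K)" by (rule down_memI[OF zl lmap_mem[OF z]])
qed

lemma down_inj:
  assumes "wf_lposet T" "wf_lposet T'" "oemb T T' \<sigma>"
  shows "inj_on (\<lambda>(K,s). (down T' (lmap \<sigma> ` K), s)) {(K,s). K \<subseteq> levs T \<and> down_closed T K}"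
proof (rule inj_onI)
  fix p1 p2 assume p1: "p1 \<in> {(K,s). K \<subseteq> levs T \<and> down_closed T K}" and p2: "p2 \<in> {(K,s). K \<subseteq> levs T \<and> down_closed T K}"
    and eq: "(\<lambda>(K,s). (down T' (lmap \<sigma> ` K), s)) p1 = (\<lambda>(K,s). (down T' (lmap \<sigma> ` K), s)) p2"
  obtain K1 s1 where P1: "p1 = (K1,s1)" by (cases p1)
  obtain K2 s2 where P2: "p2 = (K2,s2)" by (cases p2)
  have a: "K1 \<subseteq> levs T" "down_closed T K1" "K2 \<subseteq> levs T" "down_closed T K2" using p1 p2 P1 P2 by auto
  have s: "s1 = s2" and d: "down T' (lmap \<sigma> ` K1) = down T' (lmap \<sigma> ` K2)" using eq P1 P2 by auto
  have "K1 = K2"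
  proof (intro equalityI subsetI)
    fix z assume z: "z \<in> K1"
    have zl: "z \<in> levs T" using z a(1) by blast
    have "lmap \<sigma> z \<in> down T' (lmap \<sigma> ` K1)" using down_refl_mem[OF assms zl a(1,2)] z by simp
    hence "lmap \<sigma> z \<in> down T' (lmap \<sigma> ` K2)" using d by simp
    thus "z \<in> K2" using down_refl_mem[OF assms zl a(3,4)] by simp
  next
    fix z assume z: "z \<in> K2"
    have zl: "z \<in> levs T" using z a(3) by blast
    have "lmap \<sigma> z \<in> down T' (lmap \<sigma> ` K2)" using down_refl_mem[OF assms zl a(3,4)] z by simp
    hence "lmap \<sigma> z \<in> down T' (lmap \<sigma> ` K1)" using d by simp
    thus "z \<in> K1" using down_refl_mem[OF assms zl a(1,2)] by simp
  qed
  thus "p1 = p2" using P1 P2 s by simp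
qed



lemma key_max:
  assumes wB: "wf_lposet B" and wD: "wf_lposet D" and fB: "finite (evs B)"
    and hB: "oemb B D h" and kC: "oemb C D k"
    and K: "K \<subseteq> levs B" and L: "L \<subseteq> levs C"
    and eq: "down D (lmap h ` K) = down D (lmap k ` L)"
    and x: "x \<in> K"
  shows "\<exists>x'\<in>K. \<exists>y'\<in>L. (fst x, fst x') \<in> ord B \<and> h (fst x') = k (fst y')"
proof -
  have fK: "finite K" using K finite_levs[OF fB] finite_subset by blast
  define S where "S = {z \<in> K. (fst x, fst z) \<in> ord B}"
  define f where "f e = card {w \<in> K. (fst w, e) \<in> ord B}" for e
  have fS: "finite S" using fK unfolding S_def by simp
  have xS: "x \<in> S" using x wf_refl[OF wB levs_fst[OF x K]] unfolding S_def by blast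
  obtain x' where x'S: "x' \<in> S" and mx: "\<forall>z\<in>S. f (fst z) \<le> f (fst x')"
  proof -
    have "Max ((f \<circ> fst) ` S) \<in> (f \<circ> fst) ` S" using fS xS by (intro Max_in) auto
    then obtain x' where "x' \<in> S" "f (fst x') = Max ((f \<circ> fst) ` S)" by auto
    moreover have "\<forall>z\<in>S. f (fst z) \<le> Max ((f \<circ> fst) ` S)" using fS by simp
    ultimately show ?thesis using that by metis
  qed
  have x'K: "x' \<in> K" and ox': "(fst x, fst x') \<in> ord B" using x'S unfolding S_def by auto
  have ex': "fst x' \<in> evs B" by (rule levs_fst[OF x'K K])
  have hx'e: "h (fst x') \<in> evs D" by (rule oemb_ev[OF hB ex'])
  have "(h (fst x'), lab D (h (fst x'))) \<in> down D (lmap h ` K)"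
    using wf_refl[OF wD hx'e]
    by (intro down_memI[OF _ lmap_mem[OF x'K]]) (simp_all add: levs_iff fst_lmap1 hx'e)
  hence "(h (fst x'), lab D (h (fst x'))) \<in> down D (lmap k ` L)" using eq by simp
  then obtain y where yL: "y \<in> L" and o1: "(h (fst x'), k (fst y)) \<in> ord D"
    unfolding down_alt fst_lmap by auto
  have ey: "fst y \<in> evs C" by (rule levs_fst[OF yL L])
  have kye: "k (fst y) \<in> evs D" by (rule oemb_ev[OF kC ey])
  have "(k (fst y), lab D (k (fst y))) \<in> down D (lmap k ` L)"
    using wf_refl[OF wD kye]
    by (intro down_memI[OF _ lmap_mem[OF yL]]) (simp_all add: levs_iff fst_lmap1 kye)
  hence "(k (fst y), lab D (k (fst y))) \<in> down D (lmap h ` K)" using eq by simp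
  then obtain x'' where x''K: "x'' \<in> K" and o2: "(k (fst y), h (fst x'')) \<in> ord D"
    unfolding down_alt fst_lmap by auto
  have ex'': "fst x'' \<in> evs B" by (rule levs_fst[OF x''K K])
  have "(h (fst x'), h (fst x'')) \<in> ord D" by (rule wf_trans[OF wD o1 o2])
  hence o3: "(fst x', fst x'') \<in> ord B" using oemb_ord[OF hB ex' ex''] by simp
  have x''S: "x'' \<in> S" using wf_trans[OF wB ox' o3] x''K unfolding S_def by blast
  have sub: "{w \<in> K. (fst w, fst x') \<in> ord B} \<subseteq> {w \<in> K. (fst w, fst x'') \<in> ord B}"
  proof
    fix w assume "w \<in> {w \<in> K. (fst w, fst x') \<in> ord B}"
    thus "w \<in> {w \<in> K. (fst w, fst x'') \<in> ord B}" using wf_trans[OF wB _ o3] by blast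
  qed
  have "f (fst x'') \<le> f (fst x')" using mx x''S by blast
  moreover have "finite {w \<in> K. (fst w, fst x'') \<in> ord B}" using fK by simp
  moreover have "card {w \<in> K. (fst w, fst x') \<in> ord B} \<le> card {w \<in> K. (fst w, fst x'') \<in> ord B}"
    using sub calculation(2) by (rule card_mono[rotated])
  ultimately have "{w \<in> K. (fst w, fst x') \<in> ord B} = {w \<in> K. (fst w, fst x'') \<in> ord B}"
    using sub unfolding f_def by (intro card_subset_eq) auto
  moreover have "x'' \<in> {w \<in> K. (fst w, fst x'') \<in> ord B}" using x''K wf_refl[OF wB ex''] by blast
  ultimately have "(fst x'', fst x') \<in> ord B" by blast
  hence "fst x'' = fst x'" by (rule wf_antisym[OF wB _ o3])
  hence "h (fst x') = k (fst y)" using wf_antisym[OF wD o1] o2 by simp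
  hence "(fst x, fst x') \<in> ord B \<and> h (fst x') = k (fst y)" using ox' by (rule conjI[rotated])
  hence "\<exists>y'\<in>L. (fst x, fst x') \<in> ord B \<and> h (fst x') = k (fst y')" using yL by (rule bexI)
  thus ?thesis using x'K by (rule bexI)
qed

lemma pbD:
  assumes "is_pullback_O Reps P B C D p1 p2 h k"
  shows "P \<in> Reps" "B \<in> Reps" "C \<in> Reps" "D \<in> Reps"
    "oemb P B p1" "oemb P C p2" "oemb B D h" "oemb C D k" "meq P (h \<circ> p1) (k \<circ> p2)"
  using assms unfolding is_pullback_O_def by simp_all

lemma pbU:
  assumes "is_pullback_O Reps P B C D p1 p2 h k" "Q \<in> Reps" "oemb Q B q1" "oemb Q C q2"
    "meq Q (h \<circ> q1) (k \<circ> q2)"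
  shows "\<exists>u. oemb Q P u \<and> meq Q (p1 \<circ> u) q1 \<and> meq Q (p2 \<circ> u) q2"
proof -
  have "\<forall>Q\<in>Reps. \<forall>q1 q2. oemb Q B q1 \<and> oemb Q C q2 \<and> meq Q (h \<circ> q1) (k \<circ> q2) \<longrightarrow>
        (\<exists>u. oemb Q P u \<and> meq Q (p1 \<circ> u) q1 \<and> meq Q (p2 \<circ> u) q2 \<and>
             (\<forall>v. oemb Q P v \<and> meq Q (p1 \<circ> v) q1 \<and> meq Q (p2 \<circ> v) q2 \<longrightarrow> meq Q u v))"
    using assms(1) unfolding is_pullback_O_def by (elim conjE) assumption
  from this[rule_format, OF assms(2) conjI[OF assms(3) conjI[OF assms(4) assms(5)]]]
  show ?thesis by blast
qed

lemma repD: "is_rep_choice Reps \<Longrightarrow> T \<in> Reps \<Longrightarrow> wf_lposet T \<and> finite (evs T)"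
  unfolding is_rep_choice_def finite_lposet_def by simp

lemma single_lift:
  assumes R: "is_rep_choice Reps" and PB: "is_pullback_O Reps P B C D p1 p2 h k"
    and x: "x \<in> evs B" and y: "y \<in> evs C" and hk: "h x = k y"
  shows "\<exists>u\<in>evs P. p1 u = x \<and> p2 u = y"
proof -
  obtain e0 :: 'a where True by simp
  define T0 where "T0 = ({e0}, {(e0,e0)}, \<lambda>z. if z = e0 then lab B x else undefined)"
  have "finite_lposet T0"
    unfolding T0_def finite_lposet_def wf_lposet_def evs_def ord_def lab_def by auto
  moreover have "\<forall>T. finite_lposet T \<longrightarrow> (\<exists>!R. R \<in> Reps \<and> lposet_iso T R)"
    using R unfolding is_rep_choice_def by (rule conjunct2)
  ultimately have "\<exists>!R. R \<in> Reps \<and> lposet_iso T0 R" by blast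
  then obtain Q where Q: "Q \<in> Reps" "lposet_iso T0 Q" by (auto dest: ex1_implies_ex)
  have wQ: "wf_lposet Q" using repD[OF R Q(1)] by simp
  obtain \<sigma> \<tau> where st: "oemb T0 Q \<sigma>" "oemb Q T0 \<tau>" "meq Q (\<sigma> \<circ> \<tau>) id"
    using Q(2) unfolding lposet_iso_def by blast
  have evQ: "evs Q = {\<sigma> e0}"
  proof (intro equalityI subsetI)
    fix r assume r: "r \<in> evs Q"
    hence "\<tau> r = e0" using st(2) unfolding oemb_def T0_def evs_def by auto
    thus "r \<in> {\<sigma> e0}" using st(3) r unfolding meq_def by force
  next
    fix r assume "r \<in> {\<sigma> e0}"
    thus "r \<in> evs Q" using st(1) unfolding oemb_def T0_def evs_def by auto
  qed
  have labQ: "lab Q (\<sigma> e0) = lab B x" using st(1) unfolding oemb_def T0_def evs_def lab_def by auto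
  have oQ: "(\<sigma> e0, \<sigma> e0) \<in> ord Q" using wf_refl[OF wQ] evQ by blast
  have pb: "oemb B D h" "oemb C D k" using pbD[OF PB] by simp_all
  have wB: "wf_lposet B" using repD[OF R pbD(2)[OF PB]] by simp
  have wC: "wf_lposet C" using repD[OF R pbD(3)[OF PB]] by simp
  have l1: "lab D (h x) = lab B x" by (rule oemb_lab[OF pb(1) x])
  have l2: "lab D (k y) = lab C y" by (rule oemb_lab[OF pb(2) y])
  have lCy: "lab C y = lab B x" using l1 l2 hk by simp
  have q1: "oemb Q B (\<lambda>_. x)" using evQ labQ oQ x wf_refl[OF wB x] unfolding oemb_def by auto
  have q2: "oemb Q C (\<lambda>_. y)" using evQ labQ lCy oQ y wf_refl[OF wC y] unfolding oemb_def by auto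
  have "meq Q (h \<circ> (\<lambda>_. x)) (k \<circ> (\<lambda>_. y))" using hk unfolding meq_def by simp
  from pbU[OF PB Q(1) q1 q2 this]
  obtain u where u: "oemb Q P u" "meq Q (p1 \<circ> u) (\<lambda>_. x)" "meq Q (p2 \<circ> u) (\<lambda>_. y)"
    by blast
  have r0: "\<sigma> e0 \<in> evs Q" using evQ by simp
  have "u (\<sigma> e0) \<in> evs P" by (rule oemb_ev[OF u(1) r0])
  moreover have "p1 (u (\<sigma> e0)) = x" using u(2) r0 unfolding meq_def by simp
  moreover have "p2 (u (\<sigma> e0)) = y" using u(3) r0 unfolding meq_def by simp
  ultimately show ?thesis by blast
qed



lemma lmap_levs: "oemb T T' \<sigma> \<Longrightarrow> z \<in> levs T \<Longrightarrow> lmap \<sigma> z \<in> levs T'"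
  by (simp add: levs_iff lmap_def oemb_ev oemb_lab)

lemma self_down:
  assumes "wf_lposet T'" "oemb T T' \<sigma>" "x \<in> K" "K \<subseteq> levs T"
  shows "lmap \<sigma> x \<in> down T' (lmap \<sigma> ` K)"
proof -
  have l: "lmap \<sigma> x \<in> levs T'" using lmap_levs[OF assms(2)] assms(3,4) by blast
  have "(fst (lmap \<sigma> x), fst (lmap \<sigma> x)) \<in> ord T'"
    by (rule wf_refl[OF assms(1)]) (use l in \<open>simp add: levs_iff\<close>)
  thus ?thesis by (rule down_memI[OF l lmap_mem[OF assms(3)]])
qed

lemma match:
  assumes "Mmor T \<sigma> b = Mmor T \<tau> c" "(K,s) \<in> b"
  shows "\<exists>L. (L,s) \<in> c \<and> down T (lmap \<sigma> ` K) = down T (lmap \<tau> ` L)"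
proof -
  have "(down T (lmap \<sigma> ` K), s) \<in> Mmor T \<sigma> b" using assms(2) unfolding Mmor_eq
    by (rule rev_image_eqI) simp
  hence "(down T (lmap \<sigma> ` K), s) \<in> (\<lambda>(K,s). (down T (lmap \<tau> ` K), s)) ` c"
    using assms(1) unfolding Mmor_eq by simp
  then obtain p where "p \<in> c" "(down T (lmap \<sigma> ` K), s) = (\<lambda>(K,s). (down T (lmap \<tau> ` K), s)) p"
    by blast
  thus ?thesis by (cases p) auto
qed

lemma Mobj_sub: "c \<in> Mobj T \<Longrightarrow> c \<subseteq> {(K,s). K \<subseteq> levs T \<and> down_closed T K}"
  unfolding Mobj_def by auto

lemma Mobj_D: "c \<in> Mobj T \<Longrightarrow> (K,s) \<in> c \<Longrightarrow> K \<subseteq> levs T \<and> down_closed T K"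
  unfolding Mobj_def by auto

lemma Mmor_comp:
  assumes "wf_lposet T'" "wf_lposet T''" "oemb T T' \<sigma>" "oemb T' T'' \<tau>" "c \<in> Mobj T"
  shows "Mmor T'' \<tau> (Mmor T' \<sigma> c) = Mmor T'' (\<tau> \<circ> \<sigma>) c"
proof -
  have "\<forall>p\<in>c. fst p \<subseteq> levs T"
  proof
    fix p assume "p \<in> c" thus "fst p \<subseteq> levs T" using Mobj_D[OF assms(5), of "fst p" "snd p"] by simp
  qed
  hence "\<forall>p\<in>c. (\<lambda>(K,s). (down T'' (lmap \<tau> ` K), s)) ((\<lambda>(K,s). (down T' (lmap \<sigma> ` K), s)) p)
     = (\<lambda>(K,s). (down T'' (lmap (\<tau> \<circ> \<sigma>) ` K), s)) p"
    using down_comp[OF assms(1-4)] by auto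
  thus ?thesis unfolding Mmor_eq image_image by (intro image_cong) auto
qed

lemma Mmor_meq:
  assumes "meq T f g" "c \<in> Mobj T"
  shows "Mmor T' f c = Mmor T' g c"
proof -
  have "\<forall>p\<in>c. fst p \<subseteq> levs T"
  proof
    fix p assume "p \<in> c" thus "fst p \<subseteq> levs T" using Mobj_D[OF assms(2), of "fst p" "snd p"] by simp
  qed
  hence "\<forall>p\<in>c. (\<lambda>(K,s). (down T' (lmap f ` K), s)) p = (\<lambda>(K,s). (down T' (lmap g ` K), s)) p"
  proof (intro ballI)
    fix p assume p: "p \<in> c"
    obtain K s where ps: "p = (K,s)" by (cases p)
    have "down T' (lmap f ` K) = down T' (lmap g ` K)"
      by (rule down_meq[OF assms(1)]) (use Mobj_D[OF assms(2), of K s] p ps in simp)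
    thus "(\<lambda>(K,s). (down T' (lmap f ` K), s)) p = (\<lambda>(K,s). (down T' (lmap g ` K), s)) p" using ps by simp
  qed
  thus ?thesis unfolding Mmor_eq by (intro image_cong) auto
qed




lemma lmap_pt:
  assumes "oemb T T' \<sigma>" "u \<in> evs T" "x \<in> levs T'" "\<sigma> u = fst x"
  shows "lmap \<sigma> (u, lab T u) = x"
proof -
  have "snd x = lab T' (fst x)" using assms(3) by (simp add: levs_iff)
  also have "\<dots> = lab T' (\<sigma> u)" using assms(4) by simp
  also have "\<dots> = lab T u" by (rule oemb_lab[OF assms(1,2)])
  finally have "snd x = lab T u" .
  thus ?thesis using assms(4) by (cases x) (simp add: lmap_def)
qed

lemma G_props:
  assumes wP: "wf_lposet P" and fP: "finite (evs P)" and e1: "oemb P B p1"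
    and K: "K \<subseteq> levs B" and dK: "down_closed B K"
  shows "finite {z \<in> levs P. lmap p1 z \<in> K} \<and> {z \<in> levs P. lmap p1 z \<in> K} \<subseteq> levs P
     \<and> down_closed P {z \<in> levs P. lmap p1 z \<in> K}"
proof (intro conjI)
  show "finite {z \<in> levs P. lmap p1 z \<in> K}" using finite_levs[OF fP] by simp
  show "{z \<in> levs P. lmap p1 z \<in> K} \<subseteq> levs P" by blast
  show "down_closed P {z \<in> levs P. lmap p1 z \<in> K}"
    unfolding down_closed_def
  proof (intro ballI impI)
    fix y x assume y: "y \<in> {z \<in> levs P. lmap p1 z \<in> K}" and x: "x \<in> levs P" and o: "(fst x, fst y) \<in> ord P"
    have ey: "fst y \<in> evs P" and ex: "fst x \<in> evs P" using x y by (simp_all add: levs_iff)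
    have "(p1 (fst x), p1 (fst y)) \<in> ord B" using oemb_ord[OF e1 ex ey] o by simp
    hence o': "(fst (lmap p1 x), fst (lmap p1 y)) \<in> ord B" by (simp add: fst_lmap1)
    have "lmap p1 y \<in> K" using y by simp
    moreover have "lmap p1 x \<in> levs B" by (rule lmap_levs[OF e1 x])
    ultimately have "lmap p1 x \<in> K" using dK o' unfolding down_closed_def by blast
    thus "x \<in> {z \<in> levs P. lmap p1 z \<in> K}" using x by simp
  qed
qed

lemma lift_eq:
  assumes R: "is_rep_choice Reps" and PB: "is_pullback_O Reps P B C D p1 p2 h k"
    and K: "K \<subseteq> levs B" and dK: "down_closed B K"
    and L: "L \<subseteq> levs C" and dL: "down_closed C L"
    and eq: "down D (lmap h ` K) = down D (lmap k ` L)"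
  shows "down B (lmap p1 ` {z \<in> levs P. lmap p1 z \<in> K}) = K"
    "down C (lmap p2 ` {z \<in> levs P. lmap p1 z \<in> K}) = L"
proof -
  define G where "G = {z \<in> levs P. lmap p1 z \<in> K}"
  have wP: "wf_lposet P" and fP: "finite (evs P)" using repD[OF R pbD(1)[OF PB]] by simp_all
  have wB: "wf_lposet B" and fB: "finite (evs B)" using repD[OF R pbD(2)[OF PB]] by simp_all
  have wC: "wf_lposet C" and fC: "finite (evs C)" using repD[OF R pbD(3)[OF PB]] by simp_all
  have wD: "wf_lposet D" using repD[OF R pbD(4)[OF PB]] by simp_all
  note e1 = pbD(5)[OF PB] and e2 = pbD(6)[OF PB] and hB = pbD(7)[OF PB] and kC = pbD(8)[OF PB]
    and mq = pbD(9)[OF PB]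
  have "down B (lmap p1 ` G) = K"
  proof (intro equalityI subsetI)
    fix y assume "y \<in> down B (lmap p1 ` G)"
    then obtain w where y: "y \<in> levs B" and w: "w \<in> lmap p1 ` G" and o: "(fst y, fst w) \<in> ord B"
      by (rule down_memE)
    have "w \<in> K" using w unfolding G_def by blast
    thus "y \<in> K" using dK y o unfolding down_closed_def by blast
  next
    fix x assume x: "x \<in> K"
    obtain x' y' where x': "x' \<in> K" and y': "y' \<in> L" and o: "(fst x, fst x') \<in> ord B"
      and hk: "h (fst x') = k (fst y')"
      using key_max[OF wB wD fB hB kC K L eq x] by blast
    have ex': "fst x' \<in> evs B" by (rule levs_fst[OF x' K])
    have ey': "fst y' \<in> evs C" by (rule levs_fst[OF y' L])
    obtain u where u: "u \<in> evs P" "p1 u = fst x'" "p2 u = fst y'"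
      using single_lift[OF R PB ex' ey' hk] by blast
    have zl: "(u, lab P u) \<in> levs P" using u(1) by (simp add: levs_iff)
    have l1: "lmap p1 (u, lab P u) = x'" using lmap_pt[OF e1 u(1) _ u(2)] x' K by blast
    have zG: "(u, lab P u) \<in> G" using zl l1 x' unfolding G_def by simp
    have xl: "x \<in> levs B" using x K by blast
    have "(fst x, fst (lmap p1 (u, lab P u))) \<in> ord B" using o l1 by simp
    thus "x \<in> down B (lmap p1 ` G)" by (rule down_memI[OF xl lmap_mem[OF zG]])
  qed
  thus "down B (lmap p1 ` {z \<in> levs P. lmap p1 z \<in> K}) = K" unfolding G_def .
  have "down C (lmap p2 ` G) = L"
  proof (intro equalityI subsetI)
    fix y assume "y \<in> down C (lmap p2 ` G)"
    then obtain w where y: "y \<in> levs C" and w: "w \<in> lmap p2 ` G" and o: "(fst y, fst w) \<in> ord C"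
      by (rule down_memE)
    then obtain z where z: "z \<in> G" and wz: "w = lmap p2 z" by blast
    have zl: "z \<in> levs P" and x0: "lmap p1 z \<in> K" using z unfolding G_def by simp_all
    have ez: "fst z \<in> evs P" using zl by (simp add: levs_iff)
    have "lmap h (lmap p1 z) \<in> down D (lmap h ` K)" by (rule self_down[OF wD hB x0 K])
    hence "lmap h (lmap p1 z) \<in> down D (lmap k ` L)" using eq by simp
    then obtain v' where v': "v' \<in> lmap k ` L" and ov: "(fst (lmap h (lmap p1 z)), fst v') \<in> ord D"
      by (rule down_memE)
    then obtain v where v: "v \<in> L" and vv: "v' = lmap k v" by blast
    have "h (p1 (fst z)) = k (p2 (fst z))" using mq ez unfolding meq_def by simp
    hence "(k (p2 (fst z)), k (fst v)) \<in> ord D" using ov vv by (simp add: fst_lmap1)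
    moreover have "p2 (fst z) \<in> evs C" by (rule oemb_ev[OF e2 ez])
    moreover have "fst v \<in> evs C" by (rule levs_fst[OF v L])
    ultimately have "(p2 (fst z), fst v) \<in> ord C" using oemb_ord[OF kC] by simp
    hence ozv: "(fst (lmap p2 z), fst v) \<in> ord C" by (simp add: fst_lmap1)
    have "lmap p2 z \<in> levs C" by (rule lmap_levs[OF e2 zl])
    hence "lmap p2 z \<in> L" using dL v ozv unfolding down_closed_def by blast
    thus "y \<in> L" using dL y o wz unfolding down_closed_def by blast
  next
    fix y assume y: "y \<in> L"
    obtain y' x' where y': "y' \<in> L" and x': "x' \<in> K" and o: "(fst y, fst y') \<in> ord C"
      and kh: "k (fst y') = h (fst x')"
      using key_max[OF wC wD fC kC hB L K eq[symmetric] y] by blast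
    have ex': "fst x' \<in> evs B" by (rule levs_fst[OF x' K])
    have ey': "fst y' \<in> evs C" by (rule levs_fst[OF y' L])
    obtain u where u: "u \<in> evs P" "p1 u = fst x'" "p2 u = fst y'"
      using single_lift[OF R PB ex' ey' kh[symmetric]] by blast
    have zl: "(u, lab P u) \<in> levs P" using u(1) by (simp add: levs_iff)
    have l1: "lmap p1 (u, lab P u) = x'" using lmap_pt[OF e1 u(1) _ u(2)] x' K by blast
    have l2: "lmap p2 (u, lab P u) = y'" using lmap_pt[OF e2 u(1) _ u(3)] y' L by blast
    have zG: "(u, lab P u) \<in> G" using zl l1 x' unfolding G_def by simp
    have yl: "y \<in> levs C" using y L by blast
    have "(fst y, fst (lmap p2 (u, lab P u))) \<in> ord C" using o l2 by simp
    thus "y \<in> down C (lmap p2 ` G)" by (rule down_memI[OF yl lmap_mem[OF zG]])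
  qed
  thus "down C (lmap p2 ` {z \<in> levs P. lmap p1 z \<in> K}) = L" unfolding G_def .
qed



theorem lemma4:
  fixes Reps :: "('e,'a) lposet set"
  assumes "infinite (UNIV :: 'e set)"
    and "is_rep_choice Reps"
    and "is_pullback_O Reps P B C D p1 p2 h k"
  shows "is_pullback_Set (Mobj P :: ('e,'a,'s) cmarking set) (Mobj B) (Mobj C) (Mobj D)
           (Mmor B p1) (Mmor C p2) (Mmor D h) (Mmor D k)"
proof -
  note R = assms(2) and PB = assms(3)
  have wP: "wf_lposet P" and fP: "finite (evs P)" using repD[OF R pbD(1)[OF PB]] by simp_all
  have wB: "wf_lposet B" and fB: "finite (evs B)" using repD[OF R pbD(2)[OF PB]] by simp_all
  have wC: "wf_lposet C" and fC: "finite (evs C)" using repD[OF R pbD(3)[OF PB]] by simp_all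
  have wD: "wf_lposet D" and fD: "finite (evs D)" using repD[OF R pbD(4)[OF PB]] by simp_all
  note e1 = pbD(5)[OF PB] and e2 = pbD(6)[OF PB] and hB = pbD(7)[OF PB] and kC = pbD(8)[OF PB]
    and mq = pbD(9)[OF PB]
  have lB: "finite_lposet B" and lC: "finite_lposet C" and lD: "finite_lposet D"
    using wB fB wC fC wD fD unfolding finite_lposet_def by simp_all
  have finM: "finite c" if "c \<in> Mobj T" for c :: "('e,'a,'s) cmarking" and T :: "('e,'a) lposet"
    using that unfolding Mobj_def by simp
  have A1: "\<forall>x\<in>(Mobj P :: ('e,'a,'s) cmarking set). Mmor B p1 x \<in> Mobj B \<and> Mmor C p2 x \<in> Mobj C"
  proof
    fix x :: "('e,'a,'s) cmarking" assume "x \<in> Mobj P"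
    hence fx: "finite x" by (rule finM)
    show "Mmor B p1 x \<in> Mobj B \<and> Mmor C p2 x \<in> Mobj C"
      using Mmor_in[OF lB fx] Mmor_in[OF lC fx] by (rule conjI)
  qed
  have A2: "\<forall>x\<in>(Mobj B :: ('e,'a,'s) cmarking set). Mmor D h x \<in> Mobj D"
  proof
    fix x :: "('e,'a,'s) cmarking" assume "x \<in> Mobj B"
    hence fx: "finite x" by (rule finM)
    show "Mmor D h x \<in> Mobj D" by (rule Mmor_in[OF lD fx])
  qed
  have A3: "\<forall>x\<in>(Mobj C :: ('e,'a,'s) cmarking set). Mmor D k x \<in> Mobj D"
  proof
    fix x :: "('e,'a,'s) cmarking" assume "x \<in> Mobj C"
    hence fx: "finite x" by (rule finM)
    show "Mmor D k x \<in> Mobj D" by (rule Mmor_in[OF lD fx])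
  qed
  have comm: "Mmor D h (Mmor B p1 x) = Mmor D k (Mmor C p2 x)" if x: "x \<in> (Mobj P :: ('e,'a,'s) cmarking set)" for x
  proof -
    have "Mmor D h (Mmor B p1 x) = Mmor D (h \<circ> p1) x" by (rule Mmor_comp[OF wB wD e1 hB x])
    also have "\<dots> = Mmor D (k \<circ> p2) x" by (rule Mmor_meq[OF mq x])
    also have "\<dots> = Mmor D k (Mmor C p2 x)" by (rule Mmor_comp[OF wC wD e2 kC x, symmetric])
    finally show ?thesis .
  qed
  have inj: "inj_on (\<lambda>x. (Mmor B p1 x, Mmor C p2 x)) (Mobj P :: ('e,'a,'s) cmarking set)"
  proof (rule inj_onI)
    fix c1 c2 :: "('e,'a,'s) cmarking"
    assume c1: "c1 \<in> Mobj P" and c2: "c2 \<in> Mobj P"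
      and "(Mmor B p1 c1, Mmor C p2 c1) = (Mmor B p1 c2, Mmor C p2 c2)"
    hence "Mmor B p1 c1 = Mmor B p1 c2" by simp
    hence "(\<lambda>(K,s). (down B (lmap p1 ` K), s)) ` c1 = (\<lambda>(K,s). (down B (lmap p1 ` K), s)) ` c2"
      unfolding Mmor_eq .
    thus "c1 = c2" using inj_on_image_eq_iff[OF down_inj[OF wP wB e1] Mobj_sub[OF c1] Mobj_sub[OF c2]]
      by simp
  qed
  have img: "(\<lambda>x. (Mmor B p1 x, Mmor C p2 x)) ` (Mobj P :: ('e,'a,'s) cmarking set)
     = {(b, c). b \<in> Mobj B \<and> c \<in> Mobj C \<and> Mmor D h b = Mmor D k c}"
  proof (intro equalityI subsetI)
    fix pr assume "pr \<in> (\<lambda>x. (Mmor B p1 x, Mmor C p2 x)) ` (Mobj P :: ('e,'a,'s) cmarking set)"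
    then obtain x where x: "x \<in> Mobj P" and pr: "pr = (Mmor B p1 x, Mmor C p2 x)" by blast
    show "pr \<in> {(b, c). b \<in> Mobj B \<and> c \<in> Mobj C \<and> Mmor D h b = Mmor D k c}"
      using A1 x comm[OF x] pr by simp
  next
    fix pr assume "pr \<in> {(b, c). b \<in> (Mobj B :: ('e,'a,'s) cmarking set) \<and> c \<in> Mobj C \<and> Mmor D h b = Mmor D k c}"
    then obtain b c where pr: "pr = (b,c)" and b: "b \<in> (Mobj B :: ('e,'a,'s) cmarking set)"
      and c: "c \<in> (Mobj C :: ('e,'a,'s) cmarking set)" and eqM: "Mmor D h b = Mmor D k c" by blast
    define G where "G K = {z \<in> levs P. lmap p1 z \<in> K}" for K
    define c' where "c' = (\<lambda>(K,s). (G K, s)) ` b"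
    have c'P: "c' \<in> Mobj P"
      unfolding Mobj_def
    proof (intro CollectI conjI)
      show "finite c'" unfolding c'_def using finM[OF b] by simp
      show "\<forall>(K, s)\<in>c'. finite K \<and> K \<subseteq> levs P \<and> down_closed P K"
      proof (intro ballI)
        fix p assume "p \<in> c'"
        then obtain K s where Ks: "(K,s) \<in> b" and p: "p = (G K, s)" unfolding c'_def by auto
        have "finite (G K) \<and> G K \<subseteq> levs P \<and> down_closed P (G K)"
          unfolding G_def by (rule G_props[OF wP fP e1 conjunct1[OF Mobj_D[OF b Ks]] conjunct2[OF Mobj_D[OF b Ks]]])
        thus "case p of (K, s) \<Rightarrow> finite K \<and> K \<subseteq> levs P \<and> down_closed P K" using p by simp
      qed
    qed
    have m1: "Mmor B p1 c' = b"
    proof -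
      have "\<forall>p\<in>b. (\<lambda>(K,s). (down B (lmap p1 ` K), s)) ((\<lambda>(K,s). (G K, s)) p) = p"
      proof
        fix p assume p: "p \<in> b"
        obtain K s where ps: "p = (K,s)" by (cases p)
        obtain L where L: "(L,s) \<in> c" and eqL: "down D (lmap h ` K) = down D (lmap k ` L)"
          using match[OF eqM] p ps by blast
        have "down B (lmap p1 ` G K) = K"
        proof -
          have Ks: "(K,s) \<in> b" using p ps by simp
          show ?thesis unfolding G_def
            by (rule lift_eq(1)[OF R PB conjunct1[OF Mobj_D[OF b Ks]] conjunct2[OF Mobj_D[OF b Ks]]
              conjunct1[OF Mobj_D[OF c L]] conjunct2[OF Mobj_D[OF c L]] eqL])
        qed
        thus "(\<lambda>(K,s). (down B (lmap p1 ` K), s)) ((\<lambda>(K,s). (G K, s)) p) = p" using ps by simp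
      qed
      hence "(\<lambda>p. (\<lambda>(K,s). (down B (lmap p1 ` K), s)) ((\<lambda>(K,s). (G K, s)) p)) ` b = id ` b"
        by (intro image_cong) auto
      thus ?thesis unfolding Mmor_eq c'_def image_image by simp
    qed
    have m2: "Mmor C p2 c' = c"
    proof -
      have step: "(\<lambda>(K,s). (down C (lmap p2 ` K), s)) ((\<lambda>(K,s). (G K, s)) (K,s)) = (L,s)"
        if Ks: "(K,s) \<in> b" and Ls: "(L,s) \<in> c" and eqL: "down D (lmap h ` K) = down D (lmap k ` L)"
        for K L s
      proof -
        have "down C (lmap p2 ` G K) = L"
          unfolding G_def
          by (rule lift_eq(2)[OF R PB conjunct1[OF Mobj_D[OF b Ks]] conjunct2[OF Mobj_D[OF b Ks]]
              conjunct1[OF Mobj_D[OF c Ls]] conjunct2[OF Mobj_D[OF c Ls]] eqL])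
        thus ?thesis by simp
      qed
      show ?thesis unfolding Mmor_eq c'_def image_image
      proof (intro equalityI subsetI)
        fix q assume "q \<in> (\<lambda>x. (\<lambda>(K,s). (down C (lmap p2 ` K), s)) ((\<lambda>(K,s). (G K, s)) x)) ` b"
        then obtain p where p: "p \<in> b" and q: "q = (\<lambda>(K,s). (down C (lmap p2 ` K), s)) ((\<lambda>(K,s). (G K, s)) p)"
          by blast
        obtain K s where ps: "p = (K,s)" by (cases p)
        obtain L where L: "(L,s) \<in> c" and eqL: "down D (lmap h ` K) = down D (lmap k ` L)"
          using match[OF eqM] p ps by blast
        have "q = (L,s)" using step[OF _ L eqL] p ps q by simp
        thus "q \<in> c" using L by simp
      next
        fix q assume q: "q \<in> c"
        obtain L s where qs: "q = (L,s)" by (cases q)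
        obtain K where K: "(K,s) \<in> b" and eqK: "down D (lmap k ` L) = down D (lmap h ` K)"
          using match[OF eqM[symmetric]] q qs by blast
        have qq: "(\<lambda>(K,s). (down C (lmap p2 ` K), s)) ((\<lambda>(K,s). (G K, s)) (K,s)) = q"
          using step[OF K _ eqK[symmetric]] q qs by simp
        show "q \<in> (\<lambda>x. (\<lambda>(K,s). (down C (lmap p2 ` K), s)) ((\<lambda>(K,s). (G K, s)) x)) ` b"
          by (rule image_eqI[where x="(K,s)" and f="\<lambda>x. (\<lambda>(K,s). (down C (lmap p2 ` K), s)) ((\<lambda>(K,s). (G K, s)) x)", OF qq[symmetric] K])
      qed
    qed
    show "pr \<in> (\<lambda>x. (Mmor B p1 x, Mmor C p2 x)) ` (Mobj P :: ('e,'a,'s) cmarking set)"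
      by (rule image_eqI[OF _ c'P]) (simp add: pr m1 m2)
  qed
  have comm': "\<forall>x\<in>(Mobj P :: ('e,'a,'s) cmarking set). Mmor D h (Mmor B p1 x) = Mmor D k (Mmor C p2 x)"
    using comm by (intro ballI)
  show ?thesis unfolding is_pullback_Set_def bij_betw_def
    by (intro conjI A1 A2 A3 comm' inj img)
qed

end
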